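(* Let $\alpha$ be a nonzero real number. Let $p_1,p_2\in\mathbb H^2$ be two points lying on a common geodesic with $N$. (1) If $p_1$ and $p_2$ lie on the same ray starting at $N$, then the segment of this ray joining $p_1$ and $p_2$ minimizes $E_\alpha$ among all curves in $\mathbb H^2$ joining $p_1$ and $p_2$, for every such $\alpha$. (2) Suppose $\alpha>0$. If $N$ lies on the geodesic segment between $p_1$ and $p_2$, then this geodesic segment minimizes $E_\alpha$ among all curves in $\mathbb H^2$ joining $p_1$ and $p_2$.
   Context: The hyperbolic plane is $\mathbb H^2=\{(x,y,z):x^2+y^2-z^2=-1,\ z>0\}$ with the metric induced by $\langle x,y\rangle_\epsilon=x_1y_1+x_2y_2-x_3y_3$. It is parametrized by $\Psi(u,v)=(\sinh u\cos v,\sinh u\sin v,\cosh u)$, and $N=(0,0,1)$. The hyperbolic distance from $\Psi(u,v)$ to $N$ is $u$. A ray starting at $N$ is a geodesic $u\mapsto\Psi(u,v_0)$, $u\ge0$, for some fixed $v_0$. For a curve $\gamma$, the energy is $E_\alpha[\gamma]=\int_\gamma\mathsf d^\alpha\,ds$, where $s$ is hyperbolic arc length and $\mathsf d$ is the hyperbolic distance to $N$. In coordinates, $$E_\alpha[\gamma]=\int u^\alpha\sqrt{u'^2+\sinh^2(u)v'^2}\,dt.$$ The paper discards the case $\alpha=0$. *)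

theory Defs
  imports "HOL-Analysis.Analysis"
begin

definition lor :: "real^3 \<Rightarrow> real^3 \<Rightarrow> real" where
  "lor x y = x$1 * y$1 + x$2 * y$2 - x$3 * y$3"

definition H2 :: "(real^3) set" where
  "H2 = {x. lor x x = -1 \<and> x$3 > 0}"

definition NP :: "real^3" where
  "NP = vector [0, 0, 1]"

definition hdist :: "real^3 \<Rightarrow> real^3 \<Rightarrow> real" where
  "hdist p q = arcosh (- lor p q)"

definition Psi :: "real \<Rightarrow> real \<Rightarrow> real^3" where
  "Psi u v = vector [sinh u * cos v, sinh u * sin v, cosh u]"

text \<open>Unit-speed geodesic through N in direction v0, parametrized by signed
  arc length s: equals Psi s v0 for s >= 0 and Psi (-s) (v0 + pi) for s <= 0.\<close>
definition geod :: "real \<Rightarrow> real \<Rightarrow> real^3" where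
  "geod v0 s = vector [sinh s * cos v0, sinh s * sin v0, cosh s]"

definition curve_joining :: "(real \<Rightarrow> real^3) \<Rightarrow> real \<Rightarrow> real \<Rightarrow> real^3 \<Rightarrow> real^3 \<Rightarrow> bool" where
  "curve_joining \<gamma> a b p q \<longleftrightarrow>
     a \<le> b \<and> \<gamma> piecewise_C1_differentiable_on {a..b} \<and> \<gamma> ` {a..b} \<subseteq> H2
     \<and> \<gamma> a = p \<and> \<gamma> b = q"

definition energy :: "real \<Rightarrow> (real \<Rightarrow> real^3) \<Rightarrow> real \<Rightarrow> real \<Rightarrow> ennreal" where
  "energy \<alpha> \<gamma> a b =
     (\<integral>\<^sup>+ t\<in>{a..b}. ennreal (hdist (\<gamma> t) NP powr \<alpha> *
        sqrt (lor (vector_derivative \<gamma> (at t)) (vector_derivative \<gamma> (at t)))) \<partial>lborel)"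

end

theory Submission
  imports Defs
begin

lemma KL:
  fixes h h' E :: "real \<Rightarrow> real"
  assumes ab: "a \<le> b" and S: "finite S" and hc: "continuous_on {a..b} h"
    and hd: "\<And>t. t \<in> {a<..<b} - S \<Longrightarrow> (h has_real_derivative h' t) (at t)"
    and hE: "\<And>t. t \<in> {a<..<b} - S \<Longrightarrow> \<bar>h' t\<bar> \<le> E t"
  shows "ennreal \<bar>h b - h a\<bar> \<le> (\<integral>\<^sup>+ t\<in>{a..b}. ennreal (E t) \<partial>lborel)"
proof -
  have ftc: "(h' has_integral h b - h a) {a..b}"
    by (rule fundamental_theorem_of_calculus_interior_strong[OF S ab _ hc])
       (use hd in \<open>auto simp: has_real_derivative_iff_has_vector_derivative\<close>)
  define f where "f t = indicator {a..b} t * \<bar>h' t\<bar>" for t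
  have "(\<lambda>x. indicator {a..b} x *\<^sub>R h' x) \<in> lebesgue \<rightarrow>\<^sub>M borel"
    by (rule has_integral_implies_lebesgue_measurable[OF ftc])
  then have fm: "f \<in> lebesgue \<rightarrow>\<^sub>M borel"
    unfolding f_def by (rule measurable_compose[OF _ borel_measurable_abs[OF measurable_ident_sets[OF refl]], 
        THEN measurable_cong[THEN iffD1, rotated]]) (auto simp: indicator_def)
  have null: "AE t in lborel. \<forall>y\<in>S \<union> {a,b}. t \<noteq> y"
    using S by (intro AE_ball_countable' AE_lborel_singleton countable_finite) auto
  have le1: "(\<integral>\<^sup>+ t. ennreal (f t) \<partial>lborel) \<le> (\<integral>\<^sup>+ t\<in>{a..b}. ennreal (E t) \<partial>lborel)"
  proof (rule nn_integral_mono_AE)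
    show "AE t in lborel. ennreal (f t) \<le> ennreal (E t) * indicator {a..b} t"
      using null
    proof eventually_elim
      case (elim t)
      show ?case
      proof (cases "t \<in> {a..b}")
        case True
        with elim have "t \<in> {a<..<b} - S" by auto
        with hE True show ?thesis by (auto simp: f_def intro: ennreal_leI)
      qed (simp add: f_def)
    qed
  qed
  show ?thesis
  proof (cases "(\<integral>\<^sup>+ t. ennreal (f t) \<partial>lborel) = \<infinity>")
    case True
    with le1 show ?thesis by (simp add: top_unique)
  next
    case False
    then obtain r where r: "(\<integral>\<^sup>+ t. ennreal (f t) \<partial>lborel) = ennreal r" "0 \<le> r"
      by (cases "(\<integral>\<^sup>+ t. ennreal (f t) \<partial>lborel)" rule: ennreal_cases) auto
    have "integral\<^sup>N lebesgue (\<lambda>x. ennreal (f x)) = ennreal r" using r by (simp add: nn_integral_completion)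
    then have "(f has_integral r) UNIV"
      using fm r(2) by (subst has_integral_iff_nn_integral_lebesgue) (auto simp: f_def)
    moreover have "f = (\<lambda>t. if t \<in> {a..b} then \<bar>h' t\<bar> else 0)" by (auto simp: f_def indicator_def fun_eq_iff)
    ultimately have "((\<lambda>t. \<bar>h' t\<bar>) has_integral r) {a..b}"
      by (metis has_integral_restrict_UNIV)
    then have "norm (integral {a..b} h') \<le> integral {a..b} (\<lambda>t. \<bar>h' t\<bar>)"
      by (intro integral_norm_bound_integral) (use ftc in auto)
    then have "\<bar>h b - h a\<bar> \<le> r"
      using ftc \<open>((\<lambda>t. \<bar>h' t\<bar>) has_integral r) {a..b}\<close> by (simp add: integral_unique)
    then have "ennreal \<bar>h b - h a\<bar> \<le> ennreal r" by (rule ennreal_leI)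
    with le1 r show ?thesis by (metis order_trans)
  qed
qed

lemma lor_NP: "lor x NP = - x$3"
  by (simp add: lor_def NP_def)

lemma hdist_NP: "hdist x NP = arcosh (x$3)"
  by (simp add: hdist_def lor_NP)

lemma Psi_comp[simp]: "Psi u v $ 1 = sinh u * cos v" "Psi u v $ 2 = sinh u * sin v" "Psi u v $ 3 = cosh u"
  by (simp_all add: Psi_def)

lemma geod_Psi: "geod v s = Psi s v"
  by (simp add: geod_def Psi_def)

lemma H2_iff: "x \<in> H2 \<longleftrightarrow> (x$1)^2 + (x$2)^2 + 1 = (x$3)^2 \<and> x$3 > 0"
  by (auto simp: H2_def lor_def power2_eq_square algebra_simps)

lemma H2_z_ge1: assumes "x \<in> H2" shows "x$3 \<ge> 1"
proof -
  from assms have e: "(x$1)^2 + (x$2)^2 + 1 = (x$3)^2" and p: "x$3 > 0" by (auto simp: H2_iff)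
  have "1 \<le> (x$3)^2" using e by (smt (verit) zero_le_power2)
  show ?thesis
  proof (rule ccontr)
    assume "\<not> x$3 \<ge> 1"
    then have "x$3 * x$3 < 1 * 1" using p by (intro mult_strict_mono) auto
    with \<open>1 \<le> (x$3)^2\<close> show False by (simp add: power2_eq_square)
  qed
qed

lemma Psi_H2: "Psi u v \<in> H2"
proof -
  have "(sinh u * cos v)^2 + (sinh u * sin v)^2 = (sinh u)^2"
  proof -
    have "(sinh u * cos v)^2 + (sinh u * sin v)^2 = (sinh u)^2 * ((cos v)^2 + (sin v)^2)"
      by (simp only: power_mult_distrib distrib_left)
    then show ?thesis by (simp only: sin_cos_squared_add2 mult_1_right)
  qed
  then show ?thesis by (simp add: H2_iff cosh_square_eq)
qed

lemma hdist_Psi: "hdist (Psi u v) NP = \<bar>u\<bar>"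
proof -
  have "cosh u = cosh \<bar>u\<bar>" by (simp add: abs_real_def)
  then show ?thesis by (metis hdist_NP Psi_comp(3) arcosh_cosh_real abs_ge_zero)
qed

lemma tangent:
  fixes \<gamma> :: "real \<Rightarrow> real^3"
  assumes img: "\<gamma> ` {a<..<b} \<subseteq> H2" and t: "t \<in> {a<..<b}" and d: "(\<gamma> has_vector_derivative v) (at t)"
  shows "\<gamma> t $ 3 * v $ 3 = \<gamma> t $ 1 * v $ 1 + \<gamma> t $ 2 * v $ 2"
proof -
  have c: "((\<lambda>s. \<gamma> s $ i) has_real_derivative v $ i) (at t)" for i
    using bounded_linear.has_vector_derivative[OF bounded_linear_vec_nth d]
    by (simp add: has_real_derivative_iff_has_vector_derivative)
  have "((\<lambda>s. lor (\<gamma> s) (\<gamma> s)) has_real_derivative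
      2 * (\<gamma> t $ 1 * v $ 1 + \<gamma> t $ 2 * v $ 2 - \<gamma> t $ 3 * v $ 3)) (at t)"
    unfolding lor_def by (auto intro!: derivative_eq_intros c simp: algebra_simps)
  then have "((\<lambda>s. -1) has_real_derivative
      2 * (\<gamma> t $ 1 * v $ 1 + \<gamma> t $ 2 * v $ 2 - \<gamma> t $ 3 * v $ 3)) (at t)"
    by (rule has_field_derivative_transform_within_open[where S="{a<..<b}"]) (use t img in \<open>auto simp: H2_def image_subset_iff\<close>)
  then have "2 * (\<gamma> t $ 1 * v $ 1 + \<gamma> t $ 2 * v $ 2 - \<gamma> t $ 3 * v $ 3) = 0"
    using DERIV_const DERIV_unique by blast
  then show ?thesis by simp
qed

lemma A1:
  fixes p q z w a b :: real
  assumes e: "p^2 + q^2 + 1 = z^2" and z: "z > 1" and tw: "z * w = p * a + q * b"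
  shows "\<bar>w\<bar> / sqrt (z^2 - 1) \<le> sqrt (a^2 + b^2 - w^2)"
proof -
  have cs: "(p*a + q*b)^2 \<le> (p^2+q^2)*(a^2+b^2)"
    using zero_le_power2[of "p*b - q*a"] by (simp add: power2_eq_square algebra_simps)
  have z2: "z^2 - 1 > 0" using one_less_power[OF z, of 2] by simp
  have "w^2 * z^2 \<le> (z^2 - 1) * (a^2+b^2)"
  proof -
    have "z^2 - 1 = p^2 + q^2" using e by simp
    moreover have "w^2 * z^2 = (p*a+q*b)^2" using tw by (simp add: power_mult_distrib[symmetric] mult.commute)
    ultimately show ?thesis using cs by (simp add: mult.commute)
  qed
  then have "w^2 \<le> (z^2 - 1) * (a^2+b^2-w^2)" by (simp add: algebra_simps)
  then have "w^2 / (z^2 - 1) \<le> a^2+b^2-w^2" using z2 by (simp add: divide_le_eq mult.commute)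
  moreover have "(\<bar>w\<bar> / sqrt (z^2 - 1))^2 = w^2 / (z^2 - 1)"
    using z2 by (simp add: power_divide)
  ultimately show ?thesis by (metis real_le_rsqrt)
qed

definition F :: "real \<Rightarrow> real \<Rightarrow> real" where
  "F \<alpha> u = (if \<alpha> = -1 then ln u else u powr (\<alpha>+1) / (\<alpha>+1))"

lemma F_deriv: assumes "u > 0" shows "(F \<alpha> has_real_derivative u powr \<alpha>) (at u)"
proof (cases "\<alpha> = -1")
  case True
  then show ?thesis unfolding F_def using assms
    by (auto intro!: derivative_eq_intros simp: powr_minus_divide)
next
  case False
  then have "\<alpha> + 1 \<noteq> 0" by simp
  have "((\<lambda>u. u powr (\<alpha>+1)) has_real_derivative (\<alpha>+1) * u powr \<alpha>) (at u)"
    using assms by (auto intro!: derivative_eq_intros)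
  from DERIV_cdivide[OF this, of "\<alpha>+1"] show ?thesis unfolding F_def using False \<open>\<alpha> + 1 \<noteq> 0\<close>
    by simp
qed

lemma arcosh_pos: "(x::real) > 1 \<Longrightarrow> arcosh x > 0"
  by simp

lemma pw_elim:
  assumes "\<gamma> piecewise_C1_differentiable_on {a..b}"
  obtains S where "finite S" "continuous_on {a..b} \<gamma>"
    "\<And>t. t \<in> {a..b} - S \<Longrightarrow> (\<gamma> has_vector_derivative vector_derivative \<gamma> (at t)) (at t)"
  using assms unfolding piecewise_C1_differentiable_on_def C1_differentiable_on_def
  by (metis vector_derivative_at)

definition Eint :: "real \<Rightarrow> (real \<Rightarrow> real^3) \<Rightarrow> real \<Rightarrow> real" where
  "Eint \<alpha> \<gamma> t = hdist (\<gamma> t) NP powr \<alpha> *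
        sqrt (lor (vector_derivative \<gamma> (at t)) (vector_derivative \<gamma> (at t)))"

lemma energy_Eint: "energy \<alpha> \<gamma> a b = (\<integral>\<^sup>+ t\<in>{a..b}. ennreal (Eint \<alpha> \<gamma> t) \<partial>lborel)"
  by (simp add: energy_def Eint_def)

lemma energy_mono:
  assumes "a \<le> c" "e \<le> b"
  shows "(\<integral>\<^sup>+ t\<in>{c..e}. ennreal (Eint \<alpha> \<gamma> t) \<partial>lborel) \<le> energy \<alpha> \<gamma> a b"
  unfolding energy_Eint using assms
  by (intro nn_integral_mono) (auto simp: indicator_def)

lemma comp_deriv:
  fixes \<gamma> :: "real \<Rightarrow> real^3"
  assumes "(\<gamma> has_vector_derivative v) (at t)"
  shows "((\<lambda>s. \<gamma> s $ i) has_real_derivative v $ i) (at t)"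
  using bounded_linear.has_vector_derivative[OF bounded_linear_vec_nth assms]
  by (simp add: has_real_derivative_iff_has_vector_derivative)

lemma P1_seg:
  fixes \<gamma> :: "real \<Rightarrow> real^3"
  assumes pw: "\<gamma> piecewise_C1_differentiable_on {a..b}" and img: "\<gamma> ` {a..b} \<subseteq> H2"
    and sub: "a \<le> c" "c \<le> e" "e \<le> b" and pos: "\<And>t. t \<in> {c..e} \<Longrightarrow> \<gamma> t $ 3 > 1"
  shows "ennreal \<bar>F \<alpha> (arcosh (\<gamma> e $ 3)) - F \<alpha> (arcosh (\<gamma> c $ 3))\<bar> \<le> energy \<alpha> \<gamma> a b"
proof -
  obtain S where S: "finite S" and cont: "continuous_on {a..b} \<gamma>"
    and der: "\<And>t. t \<in> {a..b} - S \<Longrightarrow> (\<gamma> has_vector_derivative vector_derivative \<gamma> (at t)) (at t)"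
    using pw_elim[OF pw] by blast
  define D where "D t = vector_derivative \<gamma> (at t)" for t
  define z where "z t = \<gamma> t $ 3" for t
  define h where "h t = F \<alpha> (arcosh (z t))" for t
  define h' where "h' t = arcosh (z t) powr \<alpha> * (D t $ 3 / sqrt ((z t)^2 - 1))" for t
  have Fc: "continuous_on {0<..} (F \<alpha>)"
    by (rule continuous_at_imp_continuous_on) (use F_deriv DERIV_isCont in blast)
  have zc: "continuous_on {c..e} z"
    unfolding z_def by (intro continuous_intros continuous_on_subset[OF cont]) (use sub in auto)
  have ac: "continuous_on {c..e} (\<lambda>t. arcosh (z t))"
    by (rule continuous_on_compose2[OF continuous_on_arcosh[of "{1..}"] zc]) (use pos in \<open>auto simp: z_def less_imp_le\<close>)
  have hc: "continuous_on {c..e} h"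
    unfolding h_def by (rule continuous_on_compose2[OF Fc ac]) (use pos in \<open>auto simp: z_def intro!: arcosh_pos\<close>)
  have hd: "(h has_real_derivative h' t) (at t)" if t: "t \<in> {c<..<e} - S" for t
  proof -
    have tab: "t \<in> {a..b} - S" using t sub by auto
    have dz: "(z has_real_derivative D t $ 3) (at t)"
      unfolding z_def D_def by (rule comp_deriv[OF der[OF tab]])
    have z1: "z t > 1" using pos t by (auto simp: z_def)
    have da: "((\<lambda>s. arcosh (z s)) has_real_derivative (1 / sqrt ((z t)^2 - 1)) * (D t $ 3)) (at t)"
      by (rule DERIV_chain2[OF arcosh_real_has_field_derivative[OF z1] dz])
    have "arcosh (z t) > 0" using z1 by simp
    from DERIV_chain2[OF F_deriv[OF this] da] show ?thesis
      unfolding h_def h'_def by simp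
  qed
  have hE: "\<bar>h' t\<bar> \<le> Eint \<alpha> \<gamma> t" if t: "t \<in> {c<..<e} - S" for t
  proof -
    have tab: "t \<in> {a<..<b}" using t sub by auto
    have z1: "z t > 1" using pos t by (auto simp: z_def)
    have tg: "z t * D t $ 3 = \<gamma> t $ 1 * D t $ 1 + \<gamma> t $ 2 * D t $ 2"
      unfolding z_def D_def
      by (rule tangent[OF _ tab der]) (use img t sub in auto)
    have e: "(\<gamma> t $ 1)^2 + (\<gamma> t $ 2)^2 + 1 = (z t)^2"
    proof -
      have "\<gamma> t \<in> H2" using img t sub by auto
      then show ?thesis by (simp add: H2_iff z_def)
    qed
    have "\<bar>D t $ 3\<bar> / sqrt ((z t)^2 - 1) \<le> sqrt ((D t $ 1)^2 + (D t $ 2)^2 - (D t $ 3)^2)"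
      by (rule A1[OF e z1 tg])
    then have "arcosh (z t) powr \<alpha> * (\<bar>D t $ 3\<bar> / sqrt ((z t)^2 - 1))
        \<le> arcosh (z t) powr \<alpha> * sqrt ((D t $ 1)^2 + (D t $ 2)^2 - (D t $ 3)^2)"
      by (rule mult_left_mono) simp
    moreover have "\<bar>h' t\<bar> = arcosh (z t) powr \<alpha> * (\<bar>D t $ 3\<bar> / sqrt ((z t)^2 - 1))"
      using one_less_power[OF z1, of 2] unfolding h'_def by (simp add: abs_mult)
    moreover have "Eint \<alpha> \<gamma> t = arcosh (z t) powr \<alpha> * sqrt ((D t $ 1)^2 + (D t $ 2)^2 - (D t $ 3)^2)"
      unfolding Eint_def hdist_NP z_def D_def lor_def by (simp add: power2_eq_square)
    ultimately show ?thesis by simp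
  qed
  have "ennreal \<bar>h e - h c\<bar> \<le> (\<integral>\<^sup>+ t\<in>{c..e}. ennreal (Eint \<alpha> \<gamma> t) \<partial>lborel)"
    by (rule KL[OF sub(2) S hc hd hE])
  also have "\<dots> \<le> energy \<alpha> \<gamma> a b" by (rule energy_mono) (use sub in auto)
  finally show ?thesis by (simp add: h_def z_def)
qed

lemma last_cross:
  fixes g :: "real \<Rightarrow> real"
  assumes gc: "continuous_on {a..b} g" and ab: "a \<le> b" and y: "g a \<le> y" "y \<le> g b"
  shows "\<exists>c\<in>{a..b}. g c = y \<and> (\<forall>t\<in>{c..b}. y \<le> g t)"
proof -
  define T where "T = {t \<in> {a..b}. g t \<le> (\<lambda>_. y) t}"
  have cl: "closed T" unfolding T_def
    by (rule continuous_on_closed_Collect_le[OF gc continuous_on_const closed_atLeastAtMost])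
  have ne: "T \<noteq> {}" using y ab by (auto simp: T_def)
  have bd: "bdd_above T" by (auto simp: T_def bdd_above_def)
  define c where "c = Sup T"
  have cT: "c \<in> T" unfolding c_def by (rule closed_contains_Sup[OF ne bd cl])
  have above: "g t > y" if t: "t \<in> {a..b}" "t > c" for t
  proof (rule ccontr)
    assume "\<not> g t > y"
    then have "t \<in> T" using t by (auto simp: T_def)
    then have "t \<le> c" unfolding c_def using bd by (rule cSup_upper)
    with t show False by auto
  qed
  have gcy: "g c = y"
  proof (rule ccontr)
    assume "g c \<noteq> y"
    with cT have lt: "g c < y" by (auto simp: T_def)
    have cb: "c \<le> b" using cT by (auto simp: T_def)
    obtain x where x: "x \<ge> c" "x \<le> b" "g x = y"
      using IVT'[of g c y b] lt y cb continuous_on_subset[OF gc] cT by (force simp: T_def)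
    then have "x \<in> T" using cT by (auto simp: T_def)
    then have "x \<le> c" unfolding c_def using bd by (rule cSup_upper)
    with x lt show False by auto
  qed
  show ?thesis
  proof (intro bexI[of _ c] conjI ballI)
    fix t assume t: "t \<in> {c..b}"
    show "y \<le> g t"
    proof (cases "t = c")
      case True then show ?thesis using gcy by simp
    next
      case False then show ?thesis using above[of t] t cT by (force simp: T_def)
    qed
  qed (use cT gcy in \<open>auto simp: T_def\<close>)
qed

lemma first_cross:
  fixes g :: "real \<Rightarrow> real"
  assumes gc: "continuous_on {a..b} g" and ab: "a \<le> b" and y: "g b \<le> y" "y \<le> g a"
  shows "\<exists>c\<in>{a..b}. g c = y \<and> (\<forall>t\<in>{a..c}. y \<le> g t)"
proof -
  have gc': "continuous_on {-b..-a} (\<lambda>s. g (-s))"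
    by (rule continuous_on_compose2[OF gc]) (auto intro!: continuous_intros)
  have "\<exists>c\<in>{-b..-a}. g (-c) = y \<and> (\<forall>t\<in>{c..-a}. y \<le> g (-t))"
    by (rule last_cross[OF gc']) (use ab y in auto)
  then obtain c where c: "c \<in> {-b..-a}" "g (-c) = y" "\<forall>t\<in>{c..-a}. y \<le> g (-t)"
    by blast
  show ?thesis
  proof (intro bexI[of _ "-c"] conjI ballI)
    fix t assume "t \<in> {a..-c}" then have "-t \<in> {c..-a}" by auto
    with c(3) show "y \<le> g t" by fastforce
  qed (use c in auto)
qed

definition J :: "real \<Rightarrow> real \<Rightarrow> real \<Rightarrow> ennreal" where
  "J \<alpha> lo hi = (\<integral>\<^sup>+ u\<in>{lo..hi}. ennreal (\<bar>u\<bar> powr \<alpha>) \<partial>lborel)"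

lemma J_F: assumes "0 < lo" "lo \<le> hi" shows "J \<alpha> lo hi = ennreal (F \<alpha> hi - F \<alpha> lo)"
proof -
  have "((\<lambda>u. \<bar>u\<bar> powr \<alpha>) has_integral (F \<alpha> hi - F \<alpha> lo)) {lo..hi}"
  proof (rule fundamental_theorem_of_calculus[OF assms(2)])
    fix x assume x: "x \<in> {lo..hi}"
    then have "x > 0" using assms by auto
    then show "(F \<alpha> has_vector_derivative \<bar>x\<bar> powr \<alpha>) (at x within {lo..hi})"
      using F_deriv[of x \<alpha>] by (simp add: has_real_derivative_iff_has_vector_derivative[symmetric] has_field_derivative_at_within)
  qed
  then show ?thesis unfolding J_def
    by (intro nn_integral_has_integral_lebesgue') auto
qed


lemma hvd_scale_const: "(f has_real_derivative f') (at x) \<Longrightarrow> ((\<lambda>x. f x *\<^sub>R c) has_vector_derivative f' *\<^sub>R c) (at x)"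
  using has_vector_derivative_scaleR[OF _ has_vector_derivative_const] by fastforce

lemma Psi_deriv:
  "((\<lambda>u. Psi u v) has_vector_derivative vector[cosh u * cos v, cosh u * sin v, sinh u]) (at u)"
proof -
  have d: "((\<lambda>u. (sinh u * cos v) *\<^sub>R vector[1,0,0] + (sinh u * sin v) *\<^sub>R vector[0,1,0] + cosh u *\<^sub>R (vector[0,0,1]::real^3))
     has_vector_derivative (cosh u * cos v) *\<^sub>R vector[1,0,0] + (cosh u * sin v) *\<^sub>R vector[0,1,0] + sinh u *\<^sub>R (vector[0,0,1]::real^3)) (at u)"
  proof -
    have s: "(sinh has_real_derivative cosh u) (at u)" using has_field_derivative_sinh[OF DERIV_ident] by simp
    have c: "(cosh has_real_derivative sinh u) (at u)" using has_field_derivative_cosh[OF DERIV_ident] by simp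
    show ?thesis
      by (intro has_vector_derivative_add hvd_scale_const DERIV_cmult_right s c)
  qed
  have e1: "(\<lambda>u. Psi u v) = (\<lambda>u. (sinh u * cos v) *\<^sub>R vector[1,0,0] + (sinh u * sin v) *\<^sub>R vector[0,1,0] + cosh u *\<^sub>R (vector[0,0,1]::real^3))"
    by (simp add: fun_eq_iff vec_eq_iff forall_3)
  have e2: "vector[cosh u * cos v, cosh u * sin v, sinh u] = (cosh u * cos v) *\<^sub>R vector[1,0,0] + (cosh u * sin v) *\<^sub>R vector[0,1,0] + sinh u *\<^sub>R (vector[0,0,1]::real^3)"
    by (simp add: vec_eq_iff forall_3)
  show ?thesis unfolding e1 e2 by (rule d)
qed

lemma lor_scale: "lor (c *\<^sub>R x) (c *\<^sub>R x) = c^2 * lor x x"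
  by (simp add: lor_def power2_eq_square algebra_simps)

lemma lor_dPsi: "lor (vector[cosh u * cos v, cosh u * sin v, sinh u]) (vector[cosh u * cos v, cosh u * sin v, sinh u]) = 1"
proof -
  have "(cosh u * cos v) * (cosh u * cos v) + (cosh u * sin v) * (cosh u * sin v) = (cosh u)^2"
  proof -
    have "(cosh u * cos v)^2 + (cosh u * sin v)^2 = (cosh u)^2 * ((cos v)^2 + (sin v)^2)"
      by (simp only: power_mult_distrib distrib_left)
    then show ?thesis by (simp add: power2_eq_square)
  qed
  moreover have "cosh u * cosh u - sinh u * sinh u = 1" using cosh_square_eq[of u] by (simp add: power2_eq_square)
  ultimately show ?thesis by (simp add: lor_def power2_eq_square)
qed

lemma Eint_affine:
  "Eint \<alpha> (\<lambda>t. Psi (x0 + t*c) v) t = \<bar>x0 + t*c\<bar> powr \<alpha> * \<bar>c\<bar>"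
proof -
  have "((\<lambda>t. Psi (x0 + t*c) v) has_vector_derivative
      c *\<^sub>R vector[cosh (x0+t*c) * cos v, cosh (x0+t*c) * sin v, sinh (x0+t*c)]) (at t)"
  proof -
    have "((\<lambda>t. x0 + t*c) has_vector_derivative c) (at t)"
      by (auto intro!: derivative_eq_intros simp: has_real_derivative_iff_has_vector_derivative[symmetric])
    from vector_diff_chain_at[OF this Psi_deriv] show ?thesis by (simp add: o_def)
  qed
  then have "vector_derivative (\<lambda>t. Psi (x0 + t*c) v) (at t) =
      c *\<^sub>R vector[cosh (x0+t*c) * cos v, cosh (x0+t*c) * sin v, sinh (x0+t*c)]"
    by (rule vector_derivative_at)
  then show ?thesis by (simp add: Eint_def lor_scale lor_dPsi hdist_Psi)
qed

lemma affine_ind: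
  fixes c x0 x :: real assumes c: "c \<noteq> 0"
  shows "(x0 + c*x \<in> {min x0 (x0+c)..max x0 (x0+c)}) \<longleftrightarrow> x \<in> {0..1}"
proof (cases "c > 0")
  case True
  have "0 \<le> c*x \<longleftrightarrow> 0 \<le> x" using True by (simp add: zero_le_mult_iff)
  moreover have "c*x \<le> c \<longleftrightarrow> x \<le> 1" using True by (simp add: mult_le_cancel_left1)
  ultimately show ?thesis using True by (auto simp: min_def max_def)
next
  case False
  then have cn: "c < 0" using c by simp
  have "c*x \<le> 0 \<longleftrightarrow> 0 \<le> x" using cn by (simp add: mult_le_0_iff)
  moreover have "c \<le> c*x \<longleftrightarrow> x \<le> 1" using cn by (simp add: mult_le_cancel_left1)
  ultimately show ?thesis using cn by (auto simp: min_def max_def)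
qed

lemma energy_affine:
  assumes c: "c \<noteq> 0"
  shows "energy \<alpha> (\<lambda>t. Psi (x0 + t*c) v) 0 1 = J \<alpha> (min x0 (x0+c)) (max x0 (x0+c))"
proof -
  define lo where "lo = min x0 (x0+c)"
  define hi where "hi = max x0 (x0+c)"
  have "J \<alpha> lo hi = (\<integral>\<^sup>+ u. ennreal (\<bar>u\<bar> powr \<alpha>) * indicator {lo..hi} u \<partial>lborel)"
    by (simp add: J_def)
  also have "\<dots> = ennreal \<bar>c\<bar> * (\<integral>\<^sup>+ x. ennreal (\<bar>x0 + c*x\<bar> powr \<alpha>) * indicator {lo..hi} (x0 + c*x) \<partial>lborel)"
    by (rule nn_integral_real_affine[OF _ c]) measurable
  also have "(\<integral>\<^sup>+ x. ennreal (\<bar>x0 + c*x\<bar> powr \<alpha>) * indicator {lo..hi} (x0 + c*x) \<partial>lborel)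
      = (\<integral>\<^sup>+ x. ennreal (\<bar>x0 + x*c\<bar> powr \<alpha>) * indicator {0..1} x \<partial>lborel)"
    using affine_ind[OF c] unfolding lo_def hi_def
    by (intro nn_integral_cong) (simp add: indicator_def mult.commute)
  also have "ennreal \<bar>c\<bar> * \<dots> = (\<integral>\<^sup>+ x. ennreal \<bar>c\<bar> * (ennreal (\<bar>x0 + x*c\<bar> powr \<alpha>) * indicator {0..1} x) \<partial>lborel)"
    by (rule nn_integral_cmult[symmetric]) measurable
  also have "\<dots> = energy \<alpha> (\<lambda>t. Psi (x0 + t*c) v) 0 1"
    unfolding energy_Eint Eint_affine
    by (intro nn_integral_cong) (simp add: ennreal_mult mult.commute mult.left_commute)
  finally show ?thesis by (simp add: lo_def hi_def)
qed

lemma energy_const: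
  "energy \<alpha> (\<lambda>t. Psi x0 v) 0 1 = 0"
  using Eint_affine[of \<alpha> x0 0 v] by (simp add: energy_Eint)

lemma J_sup:
  assumes lh: "lo < hi" and bound: "\<And>\<epsilon>. lo < \<epsilon> \<Longrightarrow> \<epsilon> < hi \<Longrightarrow> J \<alpha> \<epsilon> hi \<le> X"
  shows "J \<alpha> lo hi \<le> X"
proof -
  define d where "d n = (hi - lo) / (real n + 2)" for n :: nat
  define f where "f n x = ennreal (\<bar>x\<bar> powr \<alpha>) * indicator {lo + d n..hi} x" for n x
  define g where "g x = ennreal (\<bar>x\<bar> powr \<alpha>) * indicator {lo<..hi} x" for x
  have dpos: "d n > 0" for n using lh by (simp add: d_def)
  have dlt: "lo + d n < hi" for n
  proof -
    have "d n < hi - lo" using lh unfolding d_def by (simp add: divide_less_eq)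
    then show ?thesis by simp
  qed
  have dmono: "d m \<le> d n" if "n \<le> m" for m n
    using lh that unfolding d_def by (intro divide_left_mono) auto
  have inc: "incseq f"
    unfolding incseq_def f_def le_fun_def
    by (auto intro!: mult_left_mono simp: indicator_def dest: dmono)
  have sup: "(SUP n. f n x) = g x" for x
  proof (cases "x \<in> {lo<..hi}")
    case True
    then have xp: "x - lo > 0" by simp
    obtain n :: nat where n: "(hi - lo) / (x - lo) < real n" using reals_Archimedean2 by blast
    have "d n \<le> x - lo"
    proof -
      have "hi - lo < real n * (x - lo)" using n xp by (simp add: divide_less_eq)
      also have "\<dots> \<le> (real n + 2) * (x - lo)" using xp by (intro mult_right_mono) auto
      finally show ?thesis unfolding d_def by (simp add: divide_le_eq mult.commute)
    qed
    then have "f n x = g x" using True by (simp add: f_def g_def indicator_def)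
    moreover have "f m x \<le> g x" for m using dpos[of m] by (auto simp: f_def g_def indicator_def)
    ultimately show ?thesis by (metis (no_types, lifting) SUP_upper UNIV_I antisym SUP_least)
  next
    case False
    then have "f n x = 0" for n using dpos[of n] by (auto simp: f_def indicator_def)
    then show ?thesis using False by (simp add: g_def)
  qed
  have "J \<alpha> lo hi = (\<integral>\<^sup>+ x. g x \<partial>lborel)"
    unfolding J_def g_def
    by (intro nn_integral_cong_AE) (use AE_lborel_singleton[of lo] in \<open>eventually_elim, auto simp: indicator_def\<close>)
  also have "\<dots> = (\<integral>\<^sup>+ x. (SUP n. f n x) \<partial>lborel)" by (simp add: sup)
  also have "\<dots> = (SUP n. integral\<^sup>N lborel (f n))"
    by (rule nn_integral_monotone_convergence_SUP[OF inc]) (unfold f_def, measurable)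
  also have "\<dots> \<le> X"
  proof (rule SUP_least)
    fix n
    have "integral\<^sup>N lborel (f n) = J \<alpha> (lo + d n) hi" unfolding J_def by (rule nn_integral_cong) (simp add: f_def)
    also have "\<dots> \<le> X" using bound[of "lo + d n"] dpos[of n] dlt[of n] by simp
    finally show "integral\<^sup>N lborel (f n) \<le> X" .
  qed
  finally show ?thesis .
qed

lemma affine_deriv:
  "((\<lambda>t. Psi (x0 + t*c) v) has_vector_derivative
      c *\<^sub>R vector[cosh (x0+t*c) * cos v, cosh (x0+t*c) * sin v, sinh (x0+t*c)]) (at t)"
proof -
  have "((\<lambda>t. x0 + t*c) has_vector_derivative c) (at t)"
    by (auto intro!: derivative_eq_intros simp: has_real_derivative_iff_has_vector_derivative[symmetric])
  from vector_diff_chain_at[OF this Psi_deriv] show ?thesis by (simp add: o_def)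
qed

lemma cont_vec3:
  assumes "continuous_on S f" "continuous_on S g" "continuous_on S h"
  shows "continuous_on S (\<lambda>x. (vector [f x, g x, h x] :: real^3))"
proof -
  have eq: "(\<lambda>x. (vector [f x, g x, h x] :: real^3)) =
     (\<lambda>x. f x *\<^sub>R vector[1,0,0] + g x *\<^sub>R vector[0,1,0] + h x *\<^sub>R (vector[0,0,1]::real^3))"
    by (simp add: fun_eq_iff vec_eq_iff forall_3)
  show ?thesis unfolding eq by (intro continuous_intros assms)
qed

lemma affine_pwC1: "(\<lambda>t. Psi (x0 + t*c) v) piecewise_C1_differentiable_on S"
proof (rule C1_differentiable_imp_piecewise)
  define D where "D t = c *\<^sub>R ((cosh (x0+t*c) * cos v) *\<^sub>R vector[1,0,0] + (cosh (x0+t*c) * sin v) *\<^sub>R vector[0,1,0] + sinh (x0+t*c) *\<^sub>R (vector[0,0,1]::real^3))" for t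
  have "D t = c *\<^sub>R vector[cosh (x0+t*c) * cos v, cosh (x0+t*c) * sin v, sinh (x0+t*c)]" for t
    by (simp add: D_def vec_eq_iff forall_3)
  then have "((\<lambda>t. Psi (x0 + t*c) v) has_vector_derivative D t) (at t)" for t
    using affine_deriv by simp
  moreover have "continuous_on S D" unfolding D_def by (intro continuous_intros)
  ultimately show "(\<lambda>t. Psi (x0 + t*c) v) C1_differentiable_on S"
    unfolding C1_differentiable_on_def by blast
qed

lemma H2_pos: "x \<in> H2 \<Longrightarrow> 0 < arcosh (x$3) \<Longrightarrow> x$3 > 1"
  using H2_z_ge1[of x] by (cases "x$3 = 1") auto

lemma curve_joining_affine:
  "curve_joining (\<lambda>t. Psi (x0 + t*c) v) 0 1 (Psi x0 v) (Psi (x0 + c) v)"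
  unfolding curve_joining_def using affine_pwC1 Psi_H2 by auto

lemma part1_cmp:
  assumes u1: "u1 \<ge> 0" and u2: "u2 \<ge> 0" and cj: "curve_joining \<gamma> a b (Psi u1 v0) (Psi u2 v0)"
  shows "energy \<alpha> (\<lambda>t. Psi (u1 + t * (u2 - u1)) v0) 0 1 \<le> energy \<alpha> \<gamma> a b"
proof (cases "u1 = u2")
  case True
  then show ?thesis using energy_const[of \<alpha> u1 v0] by simp
next
  case False
  from cj have ab: "a \<le> b" and pw: "\<gamma> piecewise_C1_differentiable_on {a..b}" and img: "\<gamma> ` {a..b} \<subseteq> H2"
    and ga: "\<gamma> a = Psi u1 v0" and gb: "\<gamma> b = Psi u2 v0"
    by (auto simp: curve_joining_def)
  define g where "g t = arcosh (\<gamma> t $ 3)" for t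
  have gc: "continuous_on {a..b} g"
    unfolding g_def using pw img H2_z_ge1
    by (intro continuous_on_compose2[OF continuous_on_arcosh[of "{1..}"]] continuous_intros)
       (auto simp: piecewise_C1_differentiable_on_def)
  have g1: "g a = u1" using ga u1 by (simp add: g_def arcosh_cosh_real)
  have g2: "g b = u2" using gb u2 by (simp add: g_def arcosh_cosh_real)
  have pos: "\<gamma> t $ 3 > 1" if "t \<in> {a..b}" "0 < g t" for t
    using H2_pos[of "\<gamma> t"] that img by (auto simp: g_def image_subset_iff)
  define lo where "lo = min u1 u2"
  define hi where "hi = max u1 u2"
  have "energy \<alpha> (\<lambda>t. Psi (u1 + t * (u2 - u1)) v0) 0 1 = J \<alpha> lo hi"
    using energy_affine[of "u2 - u1" \<alpha> u1 v0] False by (simp add: lo_def hi_def)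
  also have "\<dots> \<le> energy \<alpha> \<gamma> a b"
  proof (rule J_sup)
    show "lo < hi" using False by (auto simp: lo_def hi_def)
    fix \<epsilon> assume e1: "lo < \<epsilon>" and e2: "\<epsilon> < hi"
    have ep: "0 < \<epsilon>" using e1 u1 u2 by (auto simp: lo_def)
    have "J \<alpha> \<epsilon> hi = ennreal (F \<alpha> hi - F \<alpha> \<epsilon>)" using J_F[of \<epsilon> hi] ep e2 by simp
    also have "\<dots> \<le> energy \<alpha> \<gamma> a b"
    proof (cases "u1 < u2")
      case True
      then have hi: "hi = u2" and lo: "lo = u1" by (auto simp: hi_def lo_def)
      obtain c where c: "c \<in> {a..b}" "g c = \<epsilon>" "\<forall>t\<in>{c..b}. \<epsilon> \<le> g t"
        using last_cross[OF gc ab, of \<epsilon>] g1 g2 e1 e2 hi lo by auto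
      have cp: "\<gamma> t $ 3 > 1" if "t \<in> {c..b}" for t
      proof -
        have "\<epsilon> \<le> g t" using c that by auto
        then show ?thesis using pos[of t] ep that c by auto
      qed
      have "ennreal \<bar>F \<alpha> (g b) - F \<alpha> (g c)\<bar> \<le> energy \<alpha> \<gamma> a b"
        unfolding g_def
        by (rule P1_seg[OF pw img]) (use c cp in auto)
      moreover have "ennreal (F \<alpha> hi - F \<alpha> \<epsilon>) \<le> ennreal \<bar>F \<alpha> (g b) - F \<alpha> (g c)\<bar>"
        using c g2 hi by (intro ennreal_leI) auto
      ultimately show ?thesis by (rule order_trans[rotated])
    next
      case False
      with \<open>u1 \<noteq> u2\<close> have hi: "hi = u1" and lo: "lo = u2" by (auto simp: hi_def lo_def)
      obtain c where c: "c \<in> {a..b}" "g c = \<epsilon>" "\<forall>t\<in>{a..c}. \<epsilon> \<le> g t"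
        using first_cross[OF gc ab, of \<epsilon>] g1 g2 e1 e2 hi lo by auto
      have cp: "\<gamma> t $ 3 > 1" if "t \<in> {a..c}" for t
      proof -
        have "\<epsilon> \<le> g t" using c that by auto
        then show ?thesis using pos[of t] ep that c by auto
      qed
      have "ennreal \<bar>F \<alpha> (g c) - F \<alpha> (g a)\<bar> \<le> energy \<alpha> \<gamma> a b"
        unfolding g_def
        by (rule P1_seg[OF pw img]) (use c cp in auto)
      moreover have "ennreal (F \<alpha> hi - F \<alpha> \<epsilon>) \<le> ennreal \<bar>F \<alpha> (g c) - F \<alpha> (g a)\<bar>"
        using c g1 hi by (intro ennreal_leI) auto
      ultimately show ?thesis by (rule order_trans[rotated])
    qed
    finally show "J \<alpha> \<epsilon> hi \<le> energy \<alpha> \<gamma> a b" .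
  qed
  finally show ?thesis .
qed

lemma d_le_sinh: "0 \<le> (d::real) \<Longrightarrow> d \<le> sinh d"
  using real_le_x_sinh[of d] by (simp add: sinh_def exp_minus)

lemma arcosh_le: assumes "(z::real) \<ge> 1" shows "arcosh z \<le> sqrt (z^2 - 1)"
  using d_le_sinh[of "arcosh z"] assms by (simp add: sinh_arcosh_real)

lemma K_le:
  assumes a: "\<alpha> > 0" and z: "z > 1"
  shows "F \<alpha> (arcosh z) / sqrt (z^2 - 1) \<le> arcosh z powr \<alpha>"
proof -
  define d where "d = arcosh z"
  have dp: "d > 0" using z by (simp add: d_def)
  have sh: "sqrt (z^2 - 1) = sinh d" using z by (simp add: d_def sinh_arcosh_real)
  have ds: "d \<le> sinh d" using dp d_le_sinh by simp
  have "F \<alpha> d = d powr (\<alpha>+1) / (\<alpha>+1)" using a by (simp add: F_def)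
  also have "\<dots> \<le> d powr (\<alpha>+1)" using a dp by (simp add: divide_le_eq)
  also have "\<dots> = d powr \<alpha> * d" using dp by (simp add: powr_add)
  also have "\<dots> \<le> d powr \<alpha> * sinh d" using ds by (intro mult_left_mono) auto
  finally have "F \<alpha> d \<le> d powr \<alpha> * sinh d" .
  then show ?thesis using ds dp by (simp add: sh d_def[symmetric] divide_le_eq)
qed

lemma F_nonneg: "\<alpha> > 0 \<Longrightarrow> d \<ge> 0 \<Longrightarrow> F \<alpha> d \<ge> 0"
  by (simp add: F_def)

lemma A2:
  fixes p q z p' q' z' c s D B :: real
  assumes e: "p^2 + q^2 + 1 = z^2" and z: "z > 1" and tw: "z * z' = p * p' + q * q'"
    and cs: "c^2 + s^2 = 1" and B: "0 \<le> B" "B \<le> D"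
  shows "\<bar>((D - z*B) / (z^2 - 1)) * z' * (p*c + q * s) + B * (p'*c + q' * s)\<bar> \<le> D * sqrt (p'^2 + q'^2 - z'^2)"
proof -
  define R where "R = z^2 - 1"
  have R: "R > 0" using one_less_power[OF z, of 2] by (simp add: R_def)
  have pq: "p^2 + q^2 = R" using e by (simp add: R_def)
  define l where "l = (D - z*B) * z' / R"
  define X where "X = l*p + B*p'"
  define Y where "Y = l*q + B*q'"
  define Y2 where "Y2 = p'^2 + q'^2"
  have l': "((D - z*B) / (z^2 - 1)) * z' = l" by (simp add: l_def R_def)
  have lhs: "((D - z*B) / (z^2 - 1)) * z' * (p*c + q * s) + B * (p'*c + q' * s) = c*X + s*Y"
    unfolding l' X_def Y_def by (simp add: algebra_simps)
  have XY: "X^2 + Y^2 = l^2 * (p^2+q^2) + 2*l*B*(p*p'+q*q') + B^2 * Y2"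
    by (simp add: X_def Y_def Y2_def power2_eq_square algebra_simps)
  also have "\<dots> = l^2 * R + 2*l*B*(z*z') + B^2 * Y2" using pq tw by simp
  also have "\<dots> = z'^2 * (D^2 - z^2*B^2) / R + B^2 * Y2"
    using R by (simp add: l_def power2_eq_square field_simps)
  finally have XY: "X^2 + Y^2 = z'^2 * (D^2 - z^2*B^2) / R + B^2 * Y2" .
  have csq: "(p*p'+q*q')^2 \<le> (p^2+q^2)*Y2"
    using zero_le_power2[of "p*q' - q*p'"] by (simp add: Y2_def power2_eq_square algebra_simps)
  then have zz: "z^2 * z'^2 \<le> R * Y2" using tw pq by (simp add: power_mult_distrib[symmetric])
  have diff: "D^2 * (Y2 - z'^2) - (X^2 + Y^2) = (D^2 - B^2) * (Y2 - z^2*z'^2/R)"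
    using R unfolding XY by (simp add: R_def field_simps)
  have DB: "D^2 - B^2 \<ge> 0" using B by (simp add: power_mono)
  have "z^2*z'^2/R \<le> Y2" using zz R by (simp add: divide_le_eq mult.commute)
  then have "(D^2 - B^2) * (Y2 - z^2*z'^2/R) \<ge> 0" using DB by simp
  then have XYle: "X^2 + Y^2 \<le> D^2 * (Y2 - z'^2)" using diff by simp
  have cs2: "(c*X + s*Y)^2 \<le> X^2 + Y^2"
  proof -
    have "(c*X + s*Y)^2 \<le> (c^2+s^2)*(X^2+Y^2)"
      using zero_le_power2[of "c*Y - s*X"] by (simp add: power2_eq_square algebra_simps)
    then show ?thesis using cs by simp
  qed
  have "\<bar>c*X + s*Y\<bar> = sqrt ((c*X + s*Y)^2)" by simp
  also have "\<dots> \<le> sqrt (D^2 * (Y2 - z'^2))" using cs2 XYle by (intro real_sqrt_le_mono) linarith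
  also have "\<dots> = D * sqrt (Y2 - z'^2)" using B by (simp add: real_sqrt_mult)
  finally show ?thesis using lhs by (simp add: Y2_def)
qed

definition Kf :: "real \<Rightarrow> real \<Rightarrow> real" where
  "Kf \<alpha> z = F \<alpha> (arcosh z) / sqrt (z^2 - 1)"

definition Phi :: "real \<Rightarrow> real \<Rightarrow> real^3 \<Rightarrow> real" where
  "Phi \<alpha> v0 x = Kf \<alpha> (x$3) * (x$1 * cos v0 + x$2 * sin v0)"

lemma Kf_deriv:
  assumes a: "\<alpha> > 0" and z: "z > 1"
  shows "(Kf \<alpha> has_real_derivative (arcosh z powr \<alpha> - z * Kf \<alpha> z) / (z^2 - 1)) (at z)"
proof -
  define r where "r = sqrt (z^2 - 1)"
  have R: "z^2 - 1 > 0" using one_less_power[OF z, of 2] by simp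
  then have rp: "r > 0" by (simp add: r_def)
  have r2: "r^2 = z^2 - 1" using R by (simp add: r_def)
  have ap: "arcosh z > 0" using z by simp
  have df: "((\<lambda>z. F \<alpha> (arcosh z)) has_real_derivative arcosh z powr \<alpha> * (1 / r)) (at z)"
    unfolding r_def by (rule DERIV_chain2[OF F_deriv[OF ap] arcosh_real_has_field_derivative[OF z]])
  have dg0: "((\<lambda>z. z^2 - 1) has_real_derivative 2 * z) (at z)"
    by (auto intro!: derivative_eq_intros)
  have dg: "((\<lambda>z. sqrt (z^2 - 1)) has_real_derivative inverse (sqrt (z^2 - 1)) / 2 * (2 * z)) (at z)"
    by (rule DERIV_chain2[OF DERIV_real_sqrt[OF R] dg0])
  have "(Kf \<alpha> has_real_derivative
      ((arcosh z powr \<alpha> * (1 / r)) * r - (inverse r / 2 * (2 * z)) * F \<alpha> (arcosh z)) / r^2) (at z)"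
    unfolding Kf_def using DERIV_quotient[OF df dg] rp by (simp add: r_def power2_eq_square)
  moreover have "((arcosh z powr \<alpha> * (1 / r)) * r - (inverse r / 2 * (2 * z)) * F \<alpha> (arcosh z)) / r^2
      = (arcosh z powr \<alpha> - z * Kf \<alpha> z) / (z^2 - 1)"
    using rp unfolding r2[symmetric] Kf_def r_def[symmetric] by (simp add: field_simps)
  ultimately show ?thesis by simp
qed

lemma Kf_nonneg: "\<alpha> > 0 \<Longrightarrow> z \<ge> 1 \<Longrightarrow> Kf \<alpha> z \<ge> 0"
  unfolding Kf_def using F_nonneg[of \<alpha> "arcosh z"] by simp

lemma F0: "\<alpha> > 0 \<Longrightarrow> F \<alpha> 0 = 0"
  by (simp add: F_def)

lemma CS2: "((a::real) * c + b * s)^2 \<le> (a^2+b^2)*(c^2+s^2)"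
  using zero_le_power2[of "a * s - b * c"] by (simp add: power2_eq_square algebra_simps)

lemma Phi_bound:
  assumes a: "\<alpha> > 0" and x: "x \<in> H2"
  shows "\<bar>Phi \<alpha> v0 x\<bar> \<le> F \<alpha> (arcosh (x$3))"
proof -
  have z: "x$3 \<ge> 1" using H2_z_ge1[OF x] .
  have e: "(x$1)^2 + (x$2)^2 = (x$3)^2 - 1" using x by (simp add: H2_iff algebra_simps)
  have "(x$1 * cos v0 + x$2 * sin v0)^2 \<le> ((x$1)^2 + (x$2)^2) * ((cos v0)^2 + (sin v0)^2)"
    by (rule CS2)
  then have "(x$1 * cos v0 + x$2 * sin v0)^2 \<le> (x$3)^2 - 1" using e by simp
  then have m: "\<bar>x$1 * cos v0 + x$2 * sin v0\<bar> \<le> sqrt ((x$3)^2 - 1)"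
    by (metis real_sqrt_abs real_sqrt_le_mono)
  have "\<bar>Phi \<alpha> v0 x\<bar> = Kf \<alpha> (x$3) * \<bar>x$1 * cos v0 + x$2 * sin v0\<bar>"
    using Kf_nonneg[OF a z] by (simp add: Phi_def abs_mult)
  also have "\<dots> \<le> Kf \<alpha> (x$3) * sqrt ((x$3)^2 - 1)"
    using Kf_nonneg[OF a z] m by (intro mult_left_mono) auto
  also have "\<dots> \<le> F \<alpha> (arcosh (x$3))"
  proof (cases "x$3 = 1")
    case True then show ?thesis using F0[OF a] by (simp add: Kf_def)
  next
    case False
    then have "sqrt ((x$3)^2 - 1) > 0" using z one_less_power[of "x$3" 2] by simp
    then show ?thesis by (simp add: Kf_def)
  qed
  finally show ?thesis .
qed

lemma Phi_Psi:
  assumes a: "\<alpha> > 0" and u: "u \<ge> 0"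
  shows "Phi \<alpha> v0 (Psi u v0) = F \<alpha> u" and "Phi \<alpha> v0 (Psi u (v0 + pi)) = - F \<alpha> u"
proof -
  have sq: "sqrt ((cosh u)^2 - 1) = sinh u" using u by (simp add: cosh_square_eq)
  have K: "Kf \<alpha> (cosh u) = F \<alpha> u / sinh u" unfolding Kf_def sq using u by (simp add: arcosh_cosh_real)
  have KS: "Kf \<alpha> (cosh u) * sinh u = F \<alpha> u"
  proof (cases "u = 0")
    case True then show ?thesis using F0[OF a] by simp
  next
    case False
    then have "sinh u \<noteq> 0" by simp
    then show ?thesis using K by simp
  qed
  have c1: "cos v0 * cos v0 + sin v0 * sin v0 = 1" by simp
  have m1: "sinh u * cos v0 * cos v0 + sinh u * sin v0 * sin v0 = sinh u * (cos v0 * cos v0 + sin v0 * sin v0)"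
    by (simp only: distrib_left mult.assoc)
  have m2: "sinh u * cos (v0 + pi) * cos v0 + sinh u * sin (v0 + pi) * sin v0 = - (sinh u * (cos v0 * cos v0 + sin v0 * sin v0))"
    by (simp only: cos_periodic_pi sin_periodic_pi distrib_left mult.assoc mult_minus_left mult_minus_right minus_add_distrib)
  show "Phi \<alpha> v0 (Psi u v0) = F \<alpha> u"
    unfolding Phi_def Psi_comp m1 c1 using KS by simp
  show "Phi \<alpha> v0 (Psi u (v0 + pi)) = - F \<alpha> u"
    unfolding Phi_def Psi_comp m2 c1 using KS by simp
qed

lemma Phi_deriv_off:
  fixes \<gamma> :: "real \<Rightarrow> real^3"
  assumes a: "\<alpha> > 0" and d: "(\<gamma> has_vector_derivative v) (at t)" and z: "\<gamma> t $ 3 > 1"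
  shows "((\<lambda>s. Phi \<alpha> v0 (\<gamma> s)) has_real_derivative
     ((arcosh (\<gamma> t $ 3) powr \<alpha> - \<gamma> t $ 3 * Kf \<alpha> (\<gamma> t $ 3)) / ((\<gamma> t $ 3)^2 - 1)) * v$3
        * (\<gamma> t $ 1 * cos v0 + \<gamma> t $ 2 * sin v0)
     + Kf \<alpha> (\<gamma> t $ 3) * (v$1 * cos v0 + v$2 * sin v0)) (at t)"
proof -
  have dK: "((\<lambda>s. Kf \<alpha> (\<gamma> s $ 3)) has_real_derivative
      ((arcosh (\<gamma> t $ 3) powr \<alpha> - \<gamma> t $ 3 * Kf \<alpha> (\<gamma> t $ 3)) / ((\<gamma> t $ 3)^2 - 1)) * v$3) (at t)"
    by (rule DERIV_chain2[OF Kf_deriv[OF a z] comp_deriv[OF d]])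
  have dm: "((\<lambda>s. \<gamma> s $ 1 * cos v0 + \<gamma> s $ 2 * sin v0) has_real_derivative
      v$1 * cos v0 + v$2 * sin v0) (at t)"
    by (intro DERIV_add DERIV_cmult_right comp_deriv[OF d])
  show ?thesis unfolding Phi_def using DERIV_mult[OF dK dm] by (simp add: algebra_simps)
qed

lemma Phi_deriv_N:
  fixes \<gamma> :: "real \<Rightarrow> real^3"
  assumes a: "\<alpha> > 0" and d: "(\<gamma> has_vector_derivative v) (at t)" and t: "t \<in> {a<..<b}"
    and img: "\<gamma> ` {a<..<b} \<subseteq> H2" and z: "\<gamma> t $ 3 = 1"
  shows "((\<lambda>s. Phi \<alpha> v0 (\<gamma> s)) has_real_derivative 0) (at t)"
proof -
  define p where "p s = \<gamma> s $ 1" for s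
  define q where "q s = \<gamma> s $ 2" for s
  have gt: "\<gamma> t \<in> H2" using img t by auto
  have pq0: "(p t)^2 + (q t)^2 = 0" using gt z by (simp add: H2_iff p_def q_def)
  then have pt: "p t = 0" and qt: "q t = 0" by (auto simp: add_nonneg_eq_0_iff)
  have h0: "Phi \<alpha> v0 (\<gamma> t) = 0" using z by (simp add: Phi_def Kf_def)
  have dp: "((\<lambda>s. (p s - p t) / (s - t)) \<longlongrightarrow> v$1) (at t)"
    using comp_deriv[OF d, of 1] unfolding p_def has_field_derivative_iff .
  have dq: "((\<lambda>s. (q s - q t) / (s - t)) \<longlongrightarrow> v$2) (at t)"
    using comp_deriv[OF d, of 2] unfolding q_def has_field_derivative_iff .
  define Q where "Q s = sqrt (((p s - p t) / (s - t))^2 + ((q s - q t) / (s - t))^2)" for s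
  define RHS where "RHS s = Q s powr (\<alpha>+1) * \<bar>s - t\<bar> powr \<alpha> / (\<alpha>+1)" for s
  have QL: "(Q \<longlongrightarrow> sqrt ((v$1)^2 + (v$2)^2)) (at t)"
    unfolding Q_def by (intro tendsto_intros dp dq)
  have st: "((\<lambda>s. \<bar>s - t\<bar>) \<longlongrightarrow> 0) (at t)"
    by (rule tendsto_rabs_zero) (intro tendsto_eq_intros, auto)
  have "(RHS \<longlongrightarrow> sqrt ((v$1)^2 + (v$2)^2) powr (\<alpha>+1) * 0 powr \<alpha> / (\<alpha>+1)) (at t)"
    unfolding RHS_def
    by (intro tendsto_intros tendsto_powr' QL st) (use a in \<open>auto simp: Q_def\<close>)
  then have R0: "(RHS \<longlongrightarrow> 0) (at t)" by simp
  have ev: "eventually (\<lambda>s. s \<in> {a<..<b} - {t}) (at t)"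
    by (rule eventually_at_in_open) (use t in auto)
  have "eventually (\<lambda>s. norm (Phi \<alpha> v0 (\<gamma> s) / (s - t)) \<le> RHS s) (at t)"
    using ev
  proof eventually_elim
    case (elim s)
    then have gs: "\<gamma> s \<in> H2" and sne: "s \<noteq> t" using img by auto
    have z1: "\<gamma> s $ 3 \<ge> 1" using H2_z_ge1[OF gs] .
    define \<rho> where "\<rho> = sqrt ((p s)^2 + (q s)^2)"
    have e: "(p s)^2 + (q s)^2 = (\<gamma> s $ 3)^2 - 1" using gs by (simp add: H2_iff p_def q_def algebra_simps)
    have stp: "\<bar>s - t\<bar> > 0" using sne by simp
    have "\<bar>Phi \<alpha> v0 (\<gamma> s)\<bar> \<le> F \<alpha> (arcosh (\<gamma> s $ 3))" by (rule Phi_bound[OF a gs])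
    also have "\<dots> \<le> F \<alpha> \<rho>"
    proof -
      have "arcosh (\<gamma> s $ 3) \<le> \<rho>" using arcosh_le[OF z1] e by (simp add: \<rho>_def)
      then have "arcosh (\<gamma> s $ 3) powr (\<alpha>+1) \<le> \<rho> powr (\<alpha>+1)"
        using z1 a by (intro powr_mono2) auto
      then show ?thesis using a by (simp add: F_def divide_right_mono)
    qed
    finally have b1: "\<bar>Phi \<alpha> v0 (\<gamma> s)\<bar> \<le> F \<alpha> \<rho>" .
    have Qs: "Q s = \<rho> / \<bar>s - t\<bar>"
      unfolding Q_def \<rho>_def pt qt using stp
      by (simp add: power_divide add_divide_distrib[symmetric] real_sqrt_divide)
    have rho: "\<rho> = Q s * \<bar>s - t\<bar>" using Qs stp by simp
    have Qn: "Q s \<ge> 0" by (simp add: Q_def)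
    have "F \<alpha> \<rho> / \<bar>s - t\<bar> = RHS s"
    proof -
      have "\<rho> powr (\<alpha>+1) = Q s powr (\<alpha>+1) * (\<bar>s - t\<bar> powr \<alpha> * \<bar>s - t\<bar>)"
        unfolding rho powr_mult using stp by (simp add: powr_add)
      then have "F \<alpha> \<rho> = \<bar>s - t\<bar> * (Q s powr (\<alpha>+1) * \<bar>s - t\<bar> powr \<alpha>) / (\<alpha>+1)"
        using a by (simp add: F_def mult.commute mult.left_commute)
      moreover have "\<bar>s - t\<bar> \<noteq> 0" using stp by simp
      ultimately show ?thesis by (simp add: RHS_def)
    qed
    then show ?case using divide_right_mono[OF b1, of "\<bar>s - t\<bar>"] by (simp add: abs_divide)
  qed
  then have "((\<lambda>s. Phi \<alpha> v0 (\<gamma> s) / (s - t)) \<longlongrightarrow> 0) (at t)"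
    by (rule Lim_null_comparison[OF _ R0])
  then show ?thesis unfolding has_field_derivative_iff using h0 by simp
qed

lemma F_cont: assumes a: "\<alpha> > 0" shows "continuous_on {0..} (F \<alpha>)"
proof -
  have "continuous_on {0..} (\<lambda>u. u powr (\<alpha>+1) / (\<alpha>+1))"
    by (intro continuous_intros continuous_on_powr') (use a in auto)
  moreover have "F \<alpha> = (\<lambda>u. u powr (\<alpha>+1) / (\<alpha>+1))" using a by (auto simp: F_def fun_eq_iff)
  ultimately show ?thesis by simp
qed

lemma Phi_cont:
  fixes \<gamma> :: "real \<Rightarrow> real^3"
  assumes a: "\<alpha> > 0" and cont: "continuous_on {a..b} \<gamma>" and img: "\<gamma> ` {a..b} \<subseteq> H2"
  shows "continuous_on {a..b} (\<lambda>s. Phi \<alpha> v0 (\<gamma> s))"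
  unfolding continuous_on_eq_continuous_within
proof
  fix t assume t: "t \<in> {a..b}"
  have zc: "continuous_on {a..b} (\<lambda>s. \<gamma> s $ 3)" by (intro continuous_intros cont)
  have mc: "continuous_on {a..b} (\<lambda>s. \<gamma> s $ 1 * cos v0 + \<gamma> s $ 2 * sin v0)" by (intro continuous_intros cont)
  have zw: "continuous (at t within {a..b}) (\<lambda>s. \<gamma> s $ 3)"
    using zc t continuous_on_eq_continuous_within by blast
  have mw: "continuous (at t within {a..b}) (\<lambda>s. \<gamma> s $ 1 * cos v0 + \<gamma> s $ 2 * sin v0)"
    using mc t continuous_on_eq_continuous_within by blast
  have gt: "\<gamma> t \<in> H2" using img t by auto
  show "continuous (at t within {a..b}) (\<lambda>s. Phi \<alpha> v0 (\<gamma> s))"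
  proof (cases "\<gamma> t $ 3 > 1")
    case True
    have "isCont (Kf \<alpha>) (\<gamma> t $ 3)" using Kf_deriv[OF a True] DERIV_isCont by blast
    then have "continuous (at t within {a..b}) (\<lambda>s. Kf \<alpha> (\<gamma> s $ 3))"
      by (rule continuous_within_compose3[OF _ zw])
    then show ?thesis unfolding Phi_def using mw by (intro continuous_mult)
  next
    case False
    then have z: "\<gamma> t $ 3 = 1" using H2_z_ge1[OF gt] by simp
    have h0: "Phi \<alpha> v0 (\<gamma> t) = 0" using z by (simp add: Phi_def Kf_def)
    have gc: "continuous_on {a..b} (\<lambda>s. F \<alpha> (arcosh (\<gamma> s $ 3)))"
    proof (rule continuous_on_compose2[OF F_cont[OF a]])
      show "continuous_on {a..b} (\<lambda>s. arcosh (\<gamma> s $ 3))"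
        by (rule continuous_on_compose2[OF continuous_on_arcosh[of "{1..}"] zc]) (use img H2_z_ge1 in auto)
      show "(\<lambda>s. arcosh (\<gamma> s $ 3)) ` {a..b} \<subseteq> {0..}" using img H2_z_ge1 by auto
    qed
    then have "((\<lambda>s. F \<alpha> (arcosh (\<gamma> s $ 3))) \<longlongrightarrow> F \<alpha> (arcosh (\<gamma> t $ 3))) (at t within {a..b})"
      using t continuous_on_eq_continuous_within continuous_within by blast
    then have g0: "((\<lambda>s. F \<alpha> (arcosh (\<gamma> s $ 3))) \<longlongrightarrow> 0) (at t within {a..b})"
      using z F0[OF a] by simp
    have "eventually (\<lambda>s. norm (Phi \<alpha> v0 (\<gamma> s)) \<le> F \<alpha> (arcosh (\<gamma> s $ 3))) (at t within {a..b})"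
      unfolding eventually_at_filter using img by (auto intro!: always_eventually Phi_bound[OF a])
    then have "((\<lambda>s. Phi \<alpha> v0 (\<gamma> s)) \<longlongrightarrow> 0) (at t within {a..b})"
      by (rule Lim_null_comparison[OF _ g0])
    then show ?thesis unfolding continuous_within using h0 by simp
  qed
qed

lemma part2_cmp:
  fixes \<gamma> :: "real \<Rightarrow> real^3"
  assumes a: "\<alpha> > 0" and u1: "u1 \<ge> 0" and u2: "u2 \<ge> 0"
    and cj: "curve_joining \<gamma> a b (Psi u1 v0) (Psi u2 (v0 + pi))"
  shows "ennreal (F \<alpha> u1 + F \<alpha> u2) \<le> energy \<alpha> \<gamma> a b"
proof -
  from cj have ab: "a \<le> b" and pw: "\<gamma> piecewise_C1_differentiable_on {a..b}" and img: "\<gamma> ` {a..b} \<subseteq> H2"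
    and ga: "\<gamma> a = Psi u1 v0" and gb: "\<gamma> b = Psi u2 (v0 + pi)"
    by (auto simp: curve_joining_def)
  obtain S where S: "finite S" and cont: "continuous_on {a..b} \<gamma>"
    and der: "\<And>t. t \<in> {a..b} - S \<Longrightarrow> (\<gamma> has_vector_derivative vector_derivative \<gamma> (at t)) (at t)"
    using pw_elim[OF pw] by blast
  define D where "D t = vector_derivative \<gamma> (at t)" for t
  define h where "h s = Phi \<alpha> v0 (\<gamma> s)" for s
  define h' where "h' t = (if \<gamma> t $ 3 > 1 then
     ((arcosh (\<gamma> t $ 3) powr \<alpha> - \<gamma> t $ 3 * Kf \<alpha> (\<gamma> t $ 3)) / ((\<gamma> t $ 3)^2 - 1)) * D t $3
        * (\<gamma> t $ 1 * cos v0 + \<gamma> t $ 2 * sin v0)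
     + Kf \<alpha> (\<gamma> t $ 3) * (D t $1 * cos v0 + D t $2 * sin v0) else 0)" for t
  have imgo: "\<gamma> ` {a<..<b} \<subseteq> H2" using img by auto
  have hc: "continuous_on {a..b} h" unfolding h_def by (rule Phi_cont[OF a cont img])
  have hd: "(h has_real_derivative h' t) (at t)" if t: "t \<in> {a<..<b} - S" for t
  proof -
    have tab: "t \<in> {a..b} - S" using t by auto
    have gt: "\<gamma> t \<in> H2" using img tab by auto
    show ?thesis
    proof (cases "\<gamma> t $ 3 > 1")
      case True
      then show ?thesis unfolding h_def h'_def D_def using Phi_deriv_off[OF a der[OF tab] True] by simp
    next
      case False
      then have z: "\<gamma> t $ 3 = 1" using H2_z_ge1[OF gt] by simp
      show ?thesis unfolding h_def h'_def using False Phi_deriv_N[OF a der[OF tab] _ imgo z] t by simp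
    qed
  qed
  have hE: "\<bar>h' t\<bar> \<le> Eint \<alpha> \<gamma> t" if t: "t \<in> {a<..<b} - S" for t
  proof -
    have tab: "t \<in> {a..b} - S" using t by auto
    have gt: "\<gamma> t \<in> H2" using img tab by auto
    show ?thesis
    proof (cases "\<gamma> t $ 3 > 1")
      case True
      have tg: "\<gamma> t $ 3 * D t $ 3 = \<gamma> t $ 1 * D t $ 1 + \<gamma> t $ 2 * D t $ 2"
        unfolding D_def by (rule tangent[OF imgo _ der[OF tab]]) (use t in auto)
      have e: "(\<gamma> t $ 1)^2 + (\<gamma> t $ 2)^2 + 1 = (\<gamma> t $ 3)^2" using gt by (simp add: H2_iff)
      have "\<bar>h' t\<bar> \<le> arcosh (\<gamma> t $ 3) powr \<alpha> * sqrt ((D t $ 1)^2 + (D t $ 2)^2 - (D t $ 3)^2)"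
      proof -
        have cs: "(cos v0)^2 + (sin v0)^2 = 1" by simp
        have B0: "0 \<le> Kf \<alpha> (\<gamma> t $ 3)" using Kf_nonneg[OF a] True by simp
        have B1: "Kf \<alpha> (\<gamma> t $ 3) \<le> arcosh (\<gamma> t $ 3) powr \<alpha>" using K_le[OF a True] by (simp add: Kf_def)
        show ?thesis using A2[OF e True tg cs B0 B1] True by (simp add: h'_def)
      qed
      moreover have "Eint \<alpha> \<gamma> t = arcosh (\<gamma> t $ 3) powr \<alpha> * sqrt ((D t $ 1)^2 + (D t $ 2)^2 - (D t $ 3)^2)"
        unfolding Eint_def hdist_NP D_def lor_def by (simp add: power2_eq_square)
      ultimately show ?thesis by simp
    next
      case False
      then have z: "\<gamma> t $ 3 = 1" using H2_z_ge1[OF gt] by simp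
      have "Eint \<alpha> \<gamma> t = 0" using a by (simp add: Eint_def hdist_NP z)
      then show ?thesis using False by (simp add: h'_def)
    qed
  qed
  have "ennreal \<bar>h b - h a\<bar> \<le> (\<integral>\<^sup>+ t\<in>{a..b}. ennreal (Eint \<alpha> \<gamma> t) \<partial>lborel)"
    by (rule KL[OF ab S hc hd hE])
  moreover have "\<bar>h b - h a\<bar> = F \<alpha> u1 + F \<alpha> u2"
    using Phi_Psi[OF a u1, of v0] Phi_Psi[OF a u2, of v0] F_nonneg[OF a u1] F_nonneg[OF a u2]
    by (simp add: h_def ga gb)
  ultimately show ?thesis by (simp add: energy_Eint)
qed

lemma J_sym:
  assumes a: "\<alpha> > 0" and u1: "u1 \<ge> 0" and u2: "u2 \<ge> 0"
  shows "J \<alpha> (-u2) u1 = ennreal (F \<alpha> u1 + F \<alpha> u2)"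
proof -
  have Fe: "F \<alpha> = (\<lambda>u. u powr (\<alpha>+1) / (\<alpha>+1))" using a by (auto simp: F_def fun_eq_iff)
  have i1: "((\<lambda>u. \<bar>u\<bar> powr \<alpha>) has_integral (F \<alpha> u1 - F \<alpha> 0)) {0..u1}"
  proof (rule fundamental_theorem_of_calculus_interior_strong[of "{}"])
    show "continuous_on {0..u1} (F \<alpha>)" using continuous_on_subset[OF F_cont[OF a]] by auto
    fix x assume "x \<in> {0<..<u1} - {}"
    then have x: "x > 0" by auto
    show "(F \<alpha> has_vector_derivative \<bar>x\<bar> powr \<alpha>) (at x)"
      using F_deriv[OF x, of \<alpha>] x by (simp add: has_real_derivative_iff_has_vector_derivative)
  qed (use u1 in auto)
  define G where "G u = - F \<alpha> (-u)" for u
  have i2: "((\<lambda>u. \<bar>u\<bar> powr \<alpha>) has_integral (G 0 - G (-u2))) {-u2..0}"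
  proof (rule fundamental_theorem_of_calculus_interior_strong[of "{}"])
    show "continuous_on {-u2..0} G" unfolding G_def
      by (intro continuous_intros continuous_on_compose2[OF F_cont[OF a]]) auto
    fix x assume "x \<in> {-u2<..<0} - {}"
    then have x: "-x > 0" by auto
    have m1: "((\<lambda>u::real. -u) has_real_derivative -1) (at x)" by (auto intro!: derivative_eq_intros)
    have "((\<lambda>u. F \<alpha> (-u)) has_real_derivative (-x) powr \<alpha> * (-1)) (at x)"
      using DERIV_chain2[OF F_deriv[OF x, of \<alpha>] m1] by simp
    then have "(G has_real_derivative (-x) powr \<alpha>) (at x)"
      unfolding G_def using DERIV_minus by fastforce
    then show "(G has_vector_derivative \<bar>x\<bar> powr \<alpha>) (at x)"
      using x by (simp add: has_real_derivative_iff_has_vector_derivative)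
  qed (use u2 in auto)
  have "((\<lambda>u. \<bar>u\<bar> powr \<alpha>) has_integral (G 0 - G (-u2)) + (F \<alpha> u1 - F \<alpha> 0)) {-u2..u1}"
    by (rule has_integral_combine[OF _ _ i2 i1]) (use u1 u2 in auto)
  moreover have "(G 0 - G (-u2)) + (F \<alpha> u1 - F \<alpha> 0) = F \<alpha> u1 + F \<alpha> u2"
    using F0[OF a] by (simp add: G_def)
  ultimately have "((\<lambda>u. \<bar>u\<bar> powr \<alpha>) has_integral F \<alpha> u1 + F \<alpha> u2) {-u2..u1}" by simp
  then show ?thesis unfolding J_def by (intro nn_integral_has_integral_lebesgue') auto
qed

lemma Psi_neg: "Psi (-u) v = Psi u (v + pi)"
  by (simp add: vec_eq_iff forall_3)

theorem theorem2p11: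
  fixes \<alpha> :: real
  assumes "\<alpha> \<noteq> 0"
  shows
   "(\<forall>v0 u1 u2. u1 \<ge> 0 \<longrightarrow> u2 \<ge> 0 \<longrightarrow>
       (let p1 = Psi u1 v0; p2 = Psi u2 v0; \<sigma> = (\<lambda>t. Psi (u1 + t * (u2 - u1)) v0) in
         curve_joining \<sigma> 0 1 p1 p2 \<and>
         (\<forall>\<gamma> a b. curve_joining \<gamma> a b p1 p2 \<longrightarrow> energy \<alpha> \<sigma> 0 1 \<le> energy \<alpha> \<gamma> a b)))
    \<and>
    (\<alpha> > 0 \<longrightarrow>
     (\<forall>v0 u1 u2. u1 \<ge> 0 \<longrightarrow> u2 \<ge> 0 \<longrightarrow>
       (let p1 = Psi u1 v0; p2 = Psi u2 (v0 + pi); \<sigma> = (\<lambda>t. geod v0 (u1 - t * (u1 + u2))) in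
         curve_joining \<sigma> 0 1 p1 p2 \<and>
         (\<forall>\<gamma> a b. curve_joining \<gamma> a b p1 p2 \<longrightarrow> energy \<alpha> \<sigma> 0 1 \<le> energy \<alpha> \<gamma> a b))))"
proof (intro conjI impI allI)
  fix v0 u1 u2 :: real assume u1: "u1 \<ge> 0" and u2: "u2 \<ge> 0"
  have cj: "curve_joining (\<lambda>t. Psi (u1 + t * (u2 - u1)) v0) 0 1 (Psi u1 v0) (Psi u2 v0)"
    using curve_joining_affine[of u1 "u2 - u1" v0] by simp
  show "let p1 = Psi u1 v0; p2 = Psi u2 v0; \<sigma> = (\<lambda>t. Psi (u1 + t * (u2 - u1)) v0) in
         curve_joining \<sigma> 0 1 p1 p2 \<and>
         (\<forall>\<gamma> a b. curve_joining \<gamma> a b p1 p2 \<longrightarrow> energy \<alpha> \<sigma> 0 1 \<le> energy \<alpha> \<gamma> a b)"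
    unfolding Let_def using cj part1_cmp[OF u1 u2] by blast
next
  fix v0 u1 u2 :: real assume a: "\<alpha> > 0" and u1: "u1 \<ge> 0" and u2: "u2 \<ge> 0"
  have \<sigma>: "(\<lambda>t. geod v0 (u1 - t * (u1 + u2))) = (\<lambda>t. Psi (u1 + t * (-(u1 + u2))) v0)"
    by (simp add: geod_Psi fun_eq_iff algebra_simps)
  have cj: "curve_joining (\<lambda>t. Psi (u1 + t * (-(u1 + u2))) v0) 0 1 (Psi u1 v0) (Psi u2 (v0 + pi))"
    using curve_joining_affine[of u1 "-(u1 + u2)" v0] by (simp add: Psi_neg[symmetric])
  have en: "energy \<alpha> (\<lambda>t. Psi (u1 + t * (-(u1 + u2))) v0) 0 1 \<le> energy \<alpha> \<gamma> a b"
    if g: "curve_joining \<gamma> a b (Psi u1 v0) (Psi u2 (v0 + pi))" for \<gamma> a b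
  proof (cases "u1 + u2 = 0")
    case True
    then show ?thesis using energy_const[of \<alpha> u1 v0] by simp
  next
    case False
    have "energy \<alpha> (\<lambda>t. Psi (u1 + t * (-(u1 + u2))) v0) 0 1 = J \<alpha> (-u2) u1"
      using energy_affine[of "-(u1 + u2)" \<alpha> u1 v0] False u1 u2 by (simp add: min_def max_def)
    also have "\<dots> = ennreal (F \<alpha> u1 + F \<alpha> u2)" by (rule J_sym[OF a u1 u2])
    also have "\<dots> \<le> energy \<alpha> \<gamma> a b" by (rule part2_cmp[OF a u1 u2 g])
    finally show ?thesis .
  qed
  show "let p1 = Psi u1 v0; p2 = Psi u2 (v0 + pi); \<sigma> = (\<lambda>t. geod v0 (u1 - t * (u1 + u2))) in
         curve_joining \<sigma> 0 1 p1 p2 \<and>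
         (\<forall>\<gamma> a b. curve_joining \<gamma> a b p1 p2 \<longrightarrow> energy \<alpha> \<sigma> 0 1 \<le> energy \<alpha> \<gamma> a b)"
    unfolding Let_def \<sigma> using cj en by blast
qed

end
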